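(* Let $\psi:\mathbb N\to(0,1/2)$ be non-increasing with $\lim_{n\to\infty}n\psi(n)=0$. Let $\{y_n\}_{n\in\mathbb N}$ be positive numbers such that $$r_n:=\tfrac12\min\{\psi(n)^{-2}y_n,\ n^{-2}y_n^{-1}\}\to\infty\quad (n\to\infty).$$ If $x\in[0,1)$ is primitive $\psi$-approximable, then $\mathcal R_n(x,y_n)\subset\mathcal C_{r_n}$ for infinitely many $n$.
   Context: $x\in\mathbb R$ is primitive $\psi$-approximable if there are infinitely many $n\in\mathbb N$ for which some $m\in\mathbb Z$ with $\gcd(m,n)=1$ satisfies $|x-\tfrac mn|<\tfrac{\psi(n)}{n}$. $\Gamma=\mathrm{SL}_2(\mathbb Z)$, $\mathcal M=\Gamma\backslash\mathbb H$; for $Y>0$, $\mathcal C_Y\subset\mathcal M$ is the image of $\{z\in\mathbb H:\mathrm{Im}(z)>Y\}$ under the projection $\mathbb H\to\mathcal M$. $\mathcal R_n(x,y)=\{\Gamma(x+\tfrac jn+iy):0\le j\le n-1\}$. *)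

theory Defs
  imports "HOL-Analysis.Analysis"
begin

definition primitive_psi_approximable :: "(nat \<Rightarrow> real) \<Rightarrow> real \<Rightarrow> bool" where
  "primitive_psi_approximable \<psi> x \<longleftrightarrow>
     infinite {n::nat. n \<ge> 1 \<and> (\<exists>m::int. coprime m (int n) \<and> \<bar>x - real_of_int m / real n\<bar> < \<psi> n / real n)}"

definition mobius_act :: "int \<Rightarrow> int \<Rightarrow> int \<Rightarrow> int \<Rightarrow> complex \<Rightarrow> complex" where
  "mobius_act a b c d z = (of_int a * z + of_int b) / (of_int c * z + of_int d)"

text \<open>The orbit of z under SL2(Z) meets the region Im > Y, i.e. the image of z in
  the modular surface lies in the cusp neighbourhood C_Y.\<close>
definition in_cusp :: "real \<Rightarrow> complex \<Rightarrow> bool" where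
  "in_cusp Y z \<longleftrightarrow> (\<exists>a b c d::int. a * d - b * c = 1 \<and> Im (mobius_act a b c d z) > Y)"

definition R_subset_cusp :: "nat \<Rightarrow> real \<Rightarrow> real \<Rightarrow> real \<Rightarrow> bool" where
  "R_subset_cusp n x y Y \<longleftrightarrow>
     (\<forall>j<n. in_cusp Y (Complex (x + real j / real n) y))"

end

theory Submission
  imports Defs
begin

lemma im_mobius:
  assumes "a * d - b * c = 1"
  shows "Im (mobius_act a b c d (Complex s t)) = t / ((c * s + d)^2 + (c * t)^2)"
proof -
  have r: "real_of_int a * real_of_int d - real_of_int b * real_of_int c = 1"
    using assms by (metis of_int_1 of_int_diff of_int_mult)
  have "real_of_int a * t * (real_of_int c * s + real_of_int d) - (real_of_int a * s + real_of_int b) * (real_of_int c * t)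
      = t * (real_of_int a * real_of_int d - real_of_int b * real_of_int c)" by algebra
  also have "\<dots> = t" using r by simp
  finally have num: "real_of_int a * t * (real_of_int c * s + real_of_int d) - (real_of_int a * s + real_of_int b) * (real_of_int c * t) = t" .
  show ?thesis unfolding mobius_act_def Im_divide using num by simp
qed

lemma key:
  fixes x yy p :: real and n :: nat and m :: int
  assumes n: "n \<ge> 1" and yp: "0 < yy" and pp: "0 < p"
    and dm: "\<bar>x - real_of_int m / real n\<bar> < p / real n"
    and j: "j < n"
  shows "in_cusp ((1/2) * min (yy / p^2) (1 / ((real n)^2 * yy))) (Complex (x + real j / real n) yy)"
proof -
  define k where "k = m + int j"
  define g where "g = gcd k (int n)"
  have gpos: "g > 0" using n by (simp add: g_def)
  define c where "c = int n div g"
  define e where "e = k div g"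
  have cop: "coprime c e" unfolding c_def e_def g_def using n
    using div_gcd_coprime[of k "int n"] by (simp add: coprime_commute)
  have "gcd c e = 1" using cop by simp
  then obtain u v where uv: "u * c + v * e = 1" using bezout_int[of c e] by auto
  define a where "a = - v" define b where "b = - u" define d where "d = - e"
  have det: "a * d - b * c = 1" using uv by (simp add: a_def b_def d_def algebra_simps)
  have gdvdn: "g dvd int n" unfolding g_def by simp
  have gdvdk: "g dvd k" unfolding g_def by simp
  have cg: "real_of_int c * real_of_int g = real n"
    using gdvdn unfolding c_def by (metis dvd_div_mult_self of_int_mult of_int_of_nat_eq)
  have eg: "real_of_int e * real_of_int g = real_of_int k"
    using gdvdk unfolding e_def by (metis dvd_div_mult_self of_int_mult)
  have g1: "real_of_int g \<ge> 1" using gpos by simp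
  have cpos: "c > 0" using cg gpos n
  proof -
    have "real_of_int c * real_of_int g > 0" using cg n by simp
    thus ?thesis using gpos by (simp add: zero_less_mult_iff)
  qed
  have cle: "real_of_int c \<le> real n" using cg g1 cpos
  proof -
    have "real_of_int c * 1 \<le> real_of_int c * real_of_int g" using g1 cpos by (intro mult_left_mono) auto
    thus ?thesis using cg by simp
  qed
  define \<delta> where "\<delta> = x - real_of_int m / real n"
  have npos: "real n > 0" using n by simp
  have lin: "real_of_int c * (x + real j / real n) + real_of_int d = real n * \<delta> / real_of_int g"
  proof -
    have c1: "real_of_int c = real n / real_of_int g" using cg gpos by (simp add: field_simps)
    have d1: "real_of_int d = - (real_of_int m + real j) / real_of_int g"
      using eg gpos by (simp add: d_def k_def field_simps)
    have "real n / real_of_int g * (x + real j / real n) - (real_of_int m + real j) / real_of_int g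
        = real n * (x - real_of_int m / real n) / real_of_int g" using npos gpos by (simp add: field_simps)
    thus ?thesis unfolding c1 d1 \<delta>_def by (simp add: diff_divide_distrib add_divide_distrib)
  qed
  have dd: "\<bar>real n * \<delta>\<bar> < p"
  proof -
    have "real n * \<bar>\<delta>\<bar> < real n * (p / real n)" using dm npos unfolding \<delta>_def
      by (intro mult_strict_left_mono) auto
    thus ?thesis using npos by (simp add: abs_mult)
  qed
  have "\<bar>real n * \<delta> / real_of_int g\<bar> \<le> \<bar>real n * \<delta>\<bar>" using g1
  proof -
    have "\<bar>real n * \<delta>\<bar> * 1 \<le> \<bar>real n * \<delta>\<bar> * real_of_int g" using g1 by (intro mult_left_mono) auto
    thus ?thesis using g1 by (simp add: abs_divide divide_le_eq)
  qed
  hence "\<bar>real n * \<delta> / real_of_int g\<bar> < p" using dd by simp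
  hence A: "(real_of_int c * (x + real j / real n) + real_of_int d)^2 < p^2" using lin
    by (metis abs_ge_zero power2_abs power_strict_mono zero_less_numeral pos2)
  have B: "(real_of_int c * yy)^2 \<le> (real n * yy)^2" using cle cpos yp
    by (intro power_mono mult_right_mono) auto
  define D where "D = (real_of_int c * (x + real j / real n) + real_of_int d)^2 + (real_of_int c * yy)^2"
  have Dpos: "D > 0"
  proof -
    have "(real_of_int c * yy)^2 > 0" using cpos yp by simp
    thus ?thesis unfolding D_def by (intro add_nonneg_pos) auto
  qed
  have Dlt: "D < p^2 + (real n * yy)^2" using A B unfolding D_def by linarith
  have im: "Im (mobius_act a b c d (Complex (x + real j / real n) yy)) = yy / D"
    using im_mobius[OF det] unfolding D_def by simp
  have "(1/2) * min (yy / p^2) (1 / ((real n)^2 * yy)) < yy / D"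
  proof -
    have e2: "1 / ((real n)^2 * yy) = yy / (real n * yy)^2" using yp by (simp add: field_simps power2_eq_square)
    have P: "p^2 > 0" using pp by simp
    have Q: "(real n * yy)^2 > 0" using npos yp by simp
    show ?thesis
    proof (cases "p^2 \<le> (real n * yy)^2")
      case True
      have "yy / D > yy / (2 * (real n * yy)^2)" using Dlt True Dpos yp Q
        by (intro divide_strict_left_mono) auto
      moreover have "(1/2) * min (yy / p^2) (1 / ((real n)^2 * yy)) \<le> yy / (2 * (real n * yy)^2)"
        using e2 by simp
      ultimately show ?thesis by linarith
    next
      case False
      have "yy / D > yy / (2 * p^2)" using Dlt False Dpos yp P
        by (intro divide_strict_left_mono) auto
      moreover have "(1/2) * min (yy / p^2) (1 / ((real n)^2 * yy)) \<le> yy / (2 * p^2)"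
        by simp
      ultimately show ?thesis by linarith
    qed
  qed
  thus ?thesis unfolding in_cusp_def using det im by metis
qed

theorem theorem4p3:
  fixes \<psi> :: "nat \<Rightarrow> real" and y :: "nat \<Rightarrow> real" and x :: real
  assumes psi_range: "\<forall>n\<ge>1. 0 < \<psi> n \<and> \<psi> n < 1/2"
    and psi_noninc: "\<forall>m n. 1 \<le> m \<longrightarrow> m \<le> n \<longrightarrow> \<psi> n \<le> \<psi> m"
    and psi_lim: "(\<lambda>n. real n * \<psi> n) \<longlonglongrightarrow> 0"
    and y_pos: "\<forall>n\<ge>1. 0 < y n"
    and r_lim: "filterlim (\<lambda>n. (1/2) * min (y n / (\<psi> n)^2) (1 / ((real n)^2 * y n))) at_top sequentially"
    and x_range: "0 \<le> x" "x < 1"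
    and x_approx: "primitive_psi_approximable \<psi> x"
  shows "infinite {n::nat. n \<ge> 1 \<and>
           R_subset_cusp n x (y n) ((1/2) * min (y n / (\<psi> n)^2) (1 / ((real n)^2 * y n)))}"
proof -
  let ?S = "{n::nat. n \<ge> 1 \<and> (\<exists>m::int. coprime m (int n) \<and> \<bar>x - real_of_int m / real n\<bar> < \<psi> n / real n)}"
  have inf: "infinite ?S" using x_approx unfolding primitive_psi_approximable_def .
  have "?S \<subseteq> {n::nat. n \<ge> 1 \<and>
           R_subset_cusp n x (y n) ((1/2) * min (y n / (\<psi> n)^2) (1 / ((real n)^2 * y n)))}"
  proof
    fix n assume "n \<in> ?S"
    then obtain m where n1: "n \<ge> 1" and m: "\<bar>x - real_of_int m / real n\<bar> < \<psi> n / real n" by auto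
    show "n \<in> {n::nat. n \<ge> 1 \<and>
           R_subset_cusp n x (y n) ((1/2) * min (y n / (\<psi> n)^2) (1 / ((real n)^2 * y n)))}"
      unfolding R_subset_cusp_def using key[OF n1 _ _ m] n1 y_pos psi_range by auto
  qed
  thus ?thesis using inf infinite_super by blast
qed

end
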